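(* (i) $(1,2;3,4)\sim(1,2;4,3)$. (ii) $(1,2;3,4;5)\sim(1,2;4,3;5)\sim(1,2;4,5;3)\sim(1,2;5,4;3)$. (iii) $(1,2;3,5;4)\sim(1,2;5,3;4)$.
   Context: A partially ordered pattern (POP) $p$ of size $k$ is a partial order $\le_p$ on $[k]$. A permutation $\pi=\pi_1\cdots\pi_n$ contains $p$ if there are indices $i_1<\dots<i_k$ with $\pi_{i_j}<\pi_{i_m}$ whenever $j<_p m$; otherwise it avoids $p$. $p\sim q$ (Wilf-equivalence) means the numbers of permutations of $[n]$ avoiding $p$ and avoiding $q$ coincide for all $n\ge1$. Notation: $(a,b;c,d)$ denotes the POP of size $4$ on $\{a,b,c,d\}=[4]$ whose only relations are $b<a$ and $d<c$; $(a,b;c,d;e)$ denotes the POP of size $5$ on $\{a,b,c,d,e\}=[5]$ whose only relations are $b<a$ and $d<c$ (so $e$ is isolated). *)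

theory Defs
  imports Main
begin

text \<open>A POP of size k is given by its strict order relation P on {1..k}:
  P j m means j <_p m.  Permutations of [n] are lists xs with distinct xs and
  set xs = {1..n}; entry pi_i is xs ! (i - 1).\<close>

definition pop_contains :: "nat \<Rightarrow> (nat \<Rightarrow> nat \<Rightarrow> bool) \<Rightarrow> nat list \<Rightarrow> bool" where
  "pop_contains k P xs \<longleftrightarrow>
     (\<exists>idx :: nat \<Rightarrow> nat. strict_mono_on {1..k} idx \<and>
        (\<forall>j\<in>{1..k}. 1 \<le> idx j \<and> idx j \<le> length xs) \<and>
        (\<forall>j\<in>{1..k}. \<forall>m\<in>{1..k}. P j m \<longrightarrow> xs ! (idx j - 1) < xs ! (idx m - 1)))"

definition perms :: "nat \<Rightarrow> nat list set" where
  "perms n = {xs. distinct xs \<and> set xs = {1..n}}"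

definition avoiders :: "nat \<Rightarrow> nat \<Rightarrow> (nat \<Rightarrow> nat \<Rightarrow> bool) \<Rightarrow> nat list set" where
  "avoiders n k P = {xs \<in> perms n. \<not> pop_contains k P xs}"

definition wilf_equiv :: "nat \<Rightarrow> (nat \<Rightarrow> nat \<Rightarrow> bool) \<Rightarrow> (nat \<Rightarrow> nat \<Rightarrow> bool) \<Rightarrow> bool" where
  "wilf_equiv k P Q \<longleftrightarrow> (\<forall>n\<ge>1. card (avoiders n k P) = card (avoiders n k Q))"

definition pop4 :: "nat \<Rightarrow> nat \<Rightarrow> nat \<Rightarrow> nat \<Rightarrow> (nat \<Rightarrow> nat \<Rightarrow> bool)" where
  "pop4 a b c d = (\<lambda>j m. (j = b \<and> m = a) \<or> (j = d \<and> m = c))"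

text \<open>(a,b;c,d;e): the only relations are b < a and d < c (e isolated).\<close>
definition pop5 :: "nat \<Rightarrow> nat \<Rightarrow> nat \<Rightarrow> nat \<Rightarrow> nat \<Rightarrow> (nat \<Rightarrow> nat \<Rightarrow> bool)" where
  "pop5 a b c d e = (\<lambda>j m. (j = b \<and> m = a) \<or> (j = d \<and> m = c))"

end

theory Submission
  imports Defs "HOL-Library.Multiset"
begin

definition inv_at :: "nat list \<Rightarrow> nat \<Rightarrow> bool" where
  "inv_at xs b \<longleftrightarrow> b < length xs \<and> (\<exists>a<b. xs!b < xs!a)"

definition fb :: "nat list \<Rightarrow> nat" where
  "fb xs = (LEAST b. inv_at xs b)"

definition Phi :: "(nat list \<Rightarrow> nat list) \<Rightarrow> nat list \<Rightarrow> nat list" where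
  "Phi g xs = (if (\<exists>b. inv_at xs b) then take (Suc (fb xs)) xs @ g (drop (Suc (fb xs)) xs) else xs)"

definition CT :: "(nat list \<Rightarrow> bool) \<Rightarrow> nat list \<Rightarrow> bool" where
  "CT T xs \<longleftrightarrow> (\<exists>a b. a < b \<and> b < length xs \<and> xs!b < xs!a \<and> T (drop (Suc b) xs))"

lemma inv_at_take:
  assumes "b < k" "k \<le> length xs" "take k xs = take k ys" "length ys = length xs"
  shows "inv_at xs b = inv_at ys b"
proof -
  have e: "xs!i = ys!i" if "i < k" for i
    by (metis assms(3) nth_take that)
  show ?thesis unfolding inv_at_def using e assms(1,4) by (metis order.strict_trans)
qed

lemma fb_inv: "\<exists>b. inv_at xs b \<Longrightarrow> inv_at xs (fb xs)"
  unfolding fb_def by (rule LeastI_ex)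

lemma fb_le: "inv_at xs b \<Longrightarrow> fb xs \<le> b"
  unfolding fb_def by (rule Least_le)

lemma Phi_props:
  assumes gl: "\<And>s. length (g s) = length s" and h: "\<exists>b. inv_at xs b"
  shows "length (Phi g xs) = length xs" "\<exists>b. inv_at (Phi g xs) b" "fb (Phi g xs) = fb xs"
    "drop (Suc (fb xs)) (Phi g xs) = g (drop (Suc (fb xs)) xs)"
proof -
  define b where "b = fb xs"
  have ib: "inv_at xs b" using fb_inv[OF h] b_def by simp
  hence bl: "b < length xs" unfolding inv_at_def by simp
  have P: "Phi g xs = take (Suc b) xs @ g (drop (Suc b) xs)" using h b_def Phi_def by simp
  have lt: "length (take (Suc b) xs) = Suc b" using bl by simp
  show L: "length (Phi g xs) = length xs" using P gl bl by simp
  have tk: "take (Suc b) (Phi g xs) = take (Suc b) xs" using P lt by simp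
  have eq: "inv_at (Phi g xs) c = inv_at xs c" if "c \<le> b" for c
    using inv_at_take[of c "Suc b" xs "Phi g xs"] that bl tk L by simp
  have i2: "inv_at (Phi g xs) b" using eq ib by simp
  thus "\<exists>b. inv_at (Phi g xs) b" by blast
  have "fb (Phi g xs) = b" unfolding fb_def
  proof (rule Least_equality)
    show "inv_at (Phi g xs) b" by fact
    fix y assume "inv_at (Phi g xs) y"
    show "b \<le> y"
    proof (rule ccontr)
      assume "\<not> b \<le> y"
      hence "inv_at xs y" using eq \<open>inv_at (Phi g xs) y\<close> by simp
      hence "b \<le> y" using fb_le b_def by simp
      thus False using \<open>\<not> b \<le> y\<close> by simp
    qed
  qed
  thus "fb (Phi g xs) = fb xs" using b_def by simp
  show "drop (Suc (fb xs)) (Phi g xs) = g (drop (Suc (fb xs)) xs)"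
    using P lt b_def by simp
qed

lemma T_drop:
  assumes c: "\<And>x s. T s \<Longrightarrow> T (x#s)"
  shows "T (drop k s) \<Longrightarrow> T s"
proof (induction k arbitrary: s)
  case 0 thus ?case by simp
next
  case (Suc k)
  show ?case
  proof (cases s)
    case Nil thus ?thesis using Suc.prems by simp
  next
    case (Cons x t)
    hence "T t" using Suc by simp
    thus ?thesis using c Cons by simp
  qed
qed

lemma CT_char:
  assumes c: "\<And>x s. T s \<Longrightarrow> T (x#s)"
  shows "CT T xs \<longleftrightarrow> (\<exists>b. inv_at xs b) \<and> T (drop (Suc (fb xs)) xs)"
proof
  assume "CT T xs"
  then obtain a b where ab: "a < b" "b < length xs" "xs!b < xs!a" "T (drop (Suc b) xs)"
    unfolding CT_def by blast
  hence ib: "inv_at xs b" unfolding inv_at_def by blast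
  hence le: "fb xs \<le> b" by (rule fb_le)
  have "drop (Suc b) xs = drop (b - fb xs) (drop (Suc (fb xs)) xs)"
    using le by simp
  hence "T (drop (Suc (fb xs)) xs)" using T_drop[of T, OF c] ab(4) by metis
  thus "(\<exists>b. inv_at xs b) \<and> T (drop (Suc (fb xs)) xs)" using ib by blast
next
  assume h: "(\<exists>b. inv_at xs b) \<and> T (drop (Suc (fb xs)) xs)"
  hence "inv_at xs (fb xs)" using fb_inv by blast
  thus "CT T xs" using h unfolding CT_def inv_at_def by blast
qed

lemma generic:
  fixes g :: "nat list \<Rightarrow> nat list" and T1 T2 :: "nat list \<Rightarrow> bool"
  assumes ginv: "\<And>s. g (g s) = s" and gm: "\<And>s. mset (g s) = mset s"
    and gT: "\<And>s. T1 (g s) = T2 s"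
    and c1: "\<And>x s. T1 s \<Longrightarrow> T1 (x#s)" and c2: "\<And>x s. T2 s \<Longrightarrow> T2 (x#s)"
  shows "card {xs \<in> perms n. \<not> CT T1 xs} = card {xs \<in> perms n. \<not> CT T2 xs}"
proof -
  have gl: "\<And>s. length (g s) = length s" using gm by (metis size_mset)
  have inv: "Phi g (Phi g xs) = xs" for xs
  proof (cases "\<exists>b. inv_at xs b")
    case True
    note P = Phi_props[OF gl True]
    define ys where "ys = Phi g xs"
    have "Phi g ys = take (Suc (fb ys)) ys @ g (drop (Suc (fb ys)) ys)"
      using P(2) ys_def unfolding Phi_def[of g ys] by simp
    also have "\<dots> = take (Suc (fb xs)) ys @ drop (Suc (fb xs)) xs"
      using P ginv ys_def by simp
    also have "take (Suc (fb xs)) ys = take (Suc (fb xs)) xs"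
      using True fb_inv[OF True] ys_def unfolding Phi_def inv_at_def by simp
    finally have "Phi g ys = xs" by simp
    thus ?thesis using ys_def by simp
  next
    case False
    hence "Phi g xs = xs" unfolding Phi_def by meson
    thus ?thesis by simp
  qed
  have ms: "mset (Phi g xs) = mset xs" for xs
  proof (cases "\<exists>b. inv_at xs b")
    case True
    have "mset (Phi g xs) = mset (take (Suc (fb xs)) xs) + mset (drop (Suc (fb xs)) xs)"
      using True gm unfolding Phi_def by simp
    also have "\<dots> = mset xs" by (metis append_take_drop_id mset_append)
    finally show ?thesis .
  qed (simp add: Phi_def)
  have pp: "Phi g xs \<in> perms n" if "xs \<in> perms n" for xs
    using that ms[of xs] unfolding perms_def
    by (metis mem_Collect_eq mset_eq_imp_distinct_iff mset_eq_setD)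
  have key: "CT T1 (Phi g xs) \<longleftrightarrow> CT T2 xs" for xs
  proof (cases "\<exists>b. inv_at xs b")
    case True
    note P = Phi_props[OF gl True]
    show ?thesis using CT_char[of T1, OF c1, of "Phi g xs"] CT_char[of T2, OF c2, of xs] P True gT by simp
  next
    case False
    hence "Phi g xs = xs" unfolding Phi_def by meson
    thus ?thesis using CT_char[of T1, OF c1] CT_char[of T2, OF c2] False by (simp, blast)
  qed
  have "bij_betw (Phi g) {xs \<in> perms n. \<not> CT T2 xs} {xs \<in> perms n. \<not> CT T1 xs}"
  proof (rule bij_betw_byWitness[where f'="Phi g"])
    show "\<forall>a\<in>{xs \<in> perms n. \<not> CT T2 xs}. Phi g (Phi g a) = a" using inv by simp
    show "\<forall>a\<in>{xs \<in> perms n. \<not> CT T1 xs}. Phi g (Phi g a) = a" using inv by simp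
    show "Phi g ` {xs \<in> perms n. \<not> CT T2 xs} \<subseteq> {xs \<in> perms n. \<not> CT T1 xs}"
      using pp key by auto
    show "Phi g ` {xs \<in> perms n. \<not> CT T1 xs} \<subseteq> {xs \<in> perms n. \<not> CT T2 xs}"
      using pp key[of "Phi g _"] inv by auto
  qed
  thus ?thesis by (simp add: bij_betw_same_card)
qed

lemma five: "(j::nat) \<in> {1..5} \<longleftrightarrow> j = 1 \<or> j = 2 \<or> j = 3 \<or> j = 4 \<or> j = 5"
  by auto

lemma four: "(j::nat) \<in> {1..4} \<longleftrightarrow> j = 1 \<or> j = 2 \<or> j = 3 \<or> j = 4"
  by auto

lemma pc5:
  assumes "C \<in> {3,4,5}" "D \<in> {3,4,5}"
  shows "pop_contains 5 (pop5 1 2 C D E) xs \<longleftrightarrow>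
    (\<exists>i1 i2 i3 i4 i5. i1 < i2 \<and> i2 < i3 \<and> i3 < i4 \<and> i4 < i5 \<and> i5 < length xs \<and>
       xs!i2 < xs!i1 \<and> xs!([i1,i2,i3,i4,i5]!(D-1)) < xs!([i1,i2,i3,i4,i5]!(C-1)))"
proof
  assume "pop_contains 5 (pop5 1 2 C D E) xs"
  then obtain idx where sm: "strict_mono_on {1..5} idx"
    and bd: "\<forall>j\<in>{1..5}. 1 \<le> idx j \<and> idx j \<le> length xs"
    and rl: "\<forall>j\<in>{1..5}. \<forall>m\<in>{1..5}. pop5 1 2 C D E j m \<longrightarrow> xs ! (idx j - 1) < xs ! (idx m - 1)"
    unfolding pop_contains_def by blast
  have m: "idx 1 < idx 2" "idx 2 < idx 3" "idx 3 < idx 4" "idx 4 < idx 5"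
    using sm by (auto intro!: strict_mono_onD[OF sm])
  have b: "1 \<le> idx 1" "idx 5 \<le> length xs" using bd by auto
  have l5: "idx 5 - 1 < length xs" using m b by arith
  have r1: "xs!(idx 2 - 1) < xs!(idx 1 - 1)" by (rule rl[rule_format]) (auto simp: pop5_def)
  have r2: "xs!(idx D - 1) < xs!(idx C - 1)" by (rule rl[rule_format]) (use assms in \<open>auto simp: pop5_def\<close>)
  have e: "[idx 1 - 1, idx 2 - 1, idx 3 - 1, idx 4 - 1, idx 5 - 1] ! (j - 1) = idx j - 1"
    if "j \<in> {3,4,5}" for j using that by auto
  show "\<exists>i1 i2 i3 i4 i5. i1 < i2 \<and> i2 < i3 \<and> i3 < i4 \<and> i4 < i5 \<and> i5 < length xs \<and>
       xs!i2 < xs!i1 \<and> xs!([i1,i2,i3,i4,i5]!(D-1)) < xs!([i1,i2,i3,i4,i5]!(C-1))"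
    apply (rule exI[of _ "idx 1 - 1"], rule exI[of _ "idx 2 - 1"], rule exI[of _ "idx 3 - 1"],
      rule exI[of _ "idx 4 - 1"], rule exI[of _ "idx 5 - 1"])
    using m b l5 r1 r2 e[OF assms(1)] e[OF assms(2)] diff_less_mono by (simp add: less_imp_diff_less)
next
  assume "\<exists>i1 i2 i3 i4 i5. i1 < i2 \<and> i2 < i3 \<and> i3 < i4 \<and> i4 < i5 \<and> i5 < length xs \<and>
       xs!i2 < xs!i1 \<and> xs!([i1,i2,i3,i4,i5]!(D-1)) < xs!([i1,i2,i3,i4,i5]!(C-1))"
  then obtain i1 i2 i3 i4 i5 where h: "i1 < i2" "i2 < i3" "i3 < i4" "i4 < i5" "i5 < length xs"
    "xs!i2 < xs!i1" "xs!([i1,i2,i3,i4,i5]!(D-1)) < xs!([i1,i2,i3,i4,i5]!(C-1))" by blast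
  define idx where "idx = (\<lambda>j. [i1,i2,i3,i4,i5]!(j-1) + 1)"
  have sm: "strict_mono_on {1..5} idx"
    unfolding strict_mono_on_def five idx_def using h(1-4) by auto
  have bd: "\<forall>j\<in>{1..5}. 1 \<le> idx j \<and> idx j \<le> length xs"
  proof
    fix j assume "j \<in> {1..5::nat}"
    hence "j = 1 \<or> j = 2 \<or> j = 3 \<or> j = 4 \<or> j = 5" by auto
    thus "1 \<le> idx j \<and> idx j \<le> length xs" unfolding idx_def using h(1-5) by auto
  qed
  have rl: "\<forall>j\<in>{1..5}. \<forall>m\<in>{1..5}. pop5 1 2 C D E j m \<longrightarrow> xs ! (idx j - 1) < xs ! (idx m - 1)"
    unfolding pop5_def idx_def using h(6,7) by auto
  show "pop_contains 5 (pop5 1 2 C D E) xs" unfolding pop_contains_def using sm bd rl by blast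
qed

lemma pc4:
  "pop_contains 4 (pop4 1 2 C D) xs \<longleftrightarrow>
    (\<exists>i1 i2 i3 i4. i1 < i2 \<and> i2 < i3 \<and> i3 < i4 \<and> i4 < length xs \<and>
       xs!i2 < xs!i1 \<and> xs!([i1,i2,i3,i4]!(D-1)) < xs!([i1,i2,i3,i4]!(C-1)))"
  if assms: "C \<in> {3,4}" "D \<in> {3,4}"
proof
  assume "pop_contains 4 (pop4 1 2 C D) xs"
  then obtain idx where sm: "strict_mono_on {1..4} idx"
    and bd: "\<forall>j\<in>{1..4}. 1 \<le> idx j \<and> idx j \<le> length xs"
    and rl: "\<forall>j\<in>{1..4}. \<forall>m\<in>{1..4}. pop4 1 2 C D j m \<longrightarrow> xs ! (idx j - 1) < xs ! (idx m - 1)"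
    unfolding pop_contains_def by blast
  have m: "idx 1 < idx 2" "idx 2 < idx 3" "idx 3 < idx 4"
    using sm by (auto intro!: strict_mono_onD[OF sm])
  have b: "1 \<le> idx 1" "idx 4 \<le> length xs" using bd by auto
  have l5: "idx 4 - 1 < length xs" using m b by arith
  have r1: "xs!(idx 2 - 1) < xs!(idx 1 - 1)" by (rule rl[rule_format]) (auto simp: pop4_def)
  have r2: "xs!(idx D - 1) < xs!(idx C - 1)" by (rule rl[rule_format]) (use assms in \<open>auto simp: pop4_def\<close>)
  have e: "[idx 1 - 1, idx 2 - 1, idx 3 - 1, idx 4 - 1] ! (j - 1) = idx j - 1"
    if "j \<in> {3,4}" for j using that by auto
  show "\<exists>i1 i2 i3 i4. i1 < i2 \<and> i2 < i3 \<and> i3 < i4 \<and> i4 < length xs \<and>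
       xs!i2 < xs!i1 \<and> xs!([i1,i2,i3,i4]!(D-1)) < xs!([i1,i2,i3,i4]!(C-1))"
    apply (rule exI[of _ "idx 1 - 1"], rule exI[of _ "idx 2 - 1"], rule exI[of _ "idx 3 - 1"],
      rule exI[of _ "idx 4 - 1"])
    using m b l5 r1 r2 e[OF assms(1)] e[OF assms(2)] diff_less_mono by (simp add: less_imp_diff_less)
next
  assume "\<exists>i1 i2 i3 i4. i1 < i2 \<and> i2 < i3 \<and> i3 < i4 \<and> i4 < length xs \<and>
       xs!i2 < xs!i1 \<and> xs!([i1,i2,i3,i4]!(D-1)) < xs!([i1,i2,i3,i4]!(C-1))"
  then obtain i1 i2 i3 i4 where h: "i1 < i2" "i2 < i3" "i3 < i4" "i4 < length xs"
    "xs!i2 < xs!i1" "xs!([i1,i2,i3,i4]!(D-1)) < xs!([i1,i2,i3,i4]!(C-1))" by blast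
  define idx where "idx = (\<lambda>j. [i1,i2,i3,i4]!(j-1) + 1)"
  have sm: "strict_mono_on {1..4} idx"
    unfolding strict_mono_on_def four idx_def using h(1-3) by auto
  have bd: "\<forall>j\<in>{1..4}. 1 \<le> idx j \<and> idx j \<le> length xs"
  proof
    fix j assume "j \<in> {1..4::nat}"
    hence "j = 1 \<or> j = 2 \<or> j = 3 \<or> j = 4 " by auto
    thus "1 \<le> idx j \<and> idx j \<le> length xs" unfolding idx_def using h(1-4) by auto
  qed
  have rl: "\<forall>j\<in>{1..4}. \<forall>m\<in>{1..4}. pop4 1 2 C D j m \<longrightarrow> xs ! (idx j - 1) < xs ! (idx m - 1)"
    unfolding pop4_def idx_def using h(5,6) by auto
  show "pop_contains 4 (pop4 1 2 C D) xs" unfolding pop_contains_def using sm bd rl by blast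
qed


definition TA :: "nat list \<Rightarrow> bool" where
  "TA s \<longleftrightarrow> (\<exists>c d. c < d \<and> d < length s \<and> s!d < s!c)"

lemma TA_cons: "TA s \<Longrightarrow> TA (x#s)"
proof -
  assume "TA s"
  then obtain c d where "c < d \<and> d < length s \<and> s!d < s!c" unfolding TA_def by blast
  thus "TA (x#s)" unfolding TA_def by (intro exI[of _ "Suc c"] exI[of _ "Suc d"]) auto
qed

lemma TA_ct: "pop_contains 4 (pop4 1 2 3 4) xs \<longleftrightarrow> CT TA xs"
proof
  assume "pop_contains 4 (pop4 1 2 3 4) xs"
  hence "(\<exists>i1 i2 i3 i4. i1 < i2 \<and> i2 < i3 \<and> i3 < i4 \<and> i4 < length xs \<and> xs!i2 < xs!i1 \<and> xs!i4 < xs!i3)" using pc4[of 3 4 xs] by (simp add: numeral_eq_Suc)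
  then obtain i1 i2 i3 i4 where h: "i1 < i2" "i2 < i3" "i3 < i4" "i4 < length xs" "xs!i2 < xs!i1" "xs!i4 < xs!i3" by blast
  have "TA (drop (Suc i2) xs)" unfolding TA_def
    by (rule exI[of _ "i3 - Suc i2"], rule exI[of _ "i4 - Suc i2"]) (use h in auto)
  thus "CT TA xs" unfolding CT_def using h by (intro exI[of _ i1] exI[of _ i2]) auto
next
  assume "CT TA xs"
  then obtain a b c d where h: "a < b" "b < length xs" "xs!b < xs!a" "c < d \<and> d < length (drop (Suc b) xs) \<and> drop (Suc b) xs!d < drop (Suc b) xs!c"
    unfolding CT_def TA_def by blast
  have "(\<exists>i1 i2 i3 i4. i1 < i2 \<and> i2 < i3 \<and> i3 < i4 \<and> i4 < length xs \<and> xs!i2 < xs!i1 \<and> xs!i4 < xs!i3)"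
    by (rule exI[of _ "a"], rule exI[of _ "b"], rule exI[of _ "Suc b + c"], rule exI[of _ "Suc b + d"]) (use h in auto)
  thus "pop_contains 4 (pop4 1 2 3 4) xs" using pc4[of 3 4 xs] by (simp add: numeral_eq_Suc)
qed

definition TB :: "nat list \<Rightarrow> bool" where
  "TB s \<longleftrightarrow> (\<exists>c d. c < d \<and> d < length s \<and> s!c < s!d)"

lemma TB_cons: "TB s \<Longrightarrow> TB (x#s)"
proof -
  assume "TB s"
  then obtain c d where "c < d \<and> d < length s \<and> s!c < s!d" unfolding TB_def by blast
  thus "TB (x#s)" unfolding TB_def by (intro exI[of _ "Suc c"] exI[of _ "Suc d"]) auto
qed

lemma TB_ct: "pop_contains 4 (pop4 1 2 4 3) xs \<longleftrightarrow> CT TB xs"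
proof
  assume "pop_contains 4 (pop4 1 2 4 3) xs"
  hence "(\<exists>i1 i2 i3 i4. i1 < i2 \<and> i2 < i3 \<and> i3 < i4 \<and> i4 < length xs \<and> xs!i2 < xs!i1 \<and> xs!i3 < xs!i4)" using pc4[of 4 3 xs] by (simp add: numeral_eq_Suc)
  then obtain i1 i2 i3 i4 where h: "i1 < i2" "i2 < i3" "i3 < i4" "i4 < length xs" "xs!i2 < xs!i1" "xs!i3 < xs!i4" by blast
  have "TB (drop (Suc i2) xs)" unfolding TB_def
    by (rule exI[of _ "i3 - Suc i2"], rule exI[of _ "i4 - Suc i2"]) (use h in auto)
  thus "CT TB xs" unfolding CT_def using h by (intro exI[of _ i1] exI[of _ i2]) auto
next
  assume "CT TB xs"
  then obtain a b c d where h: "a < b" "b < length xs" "xs!b < xs!a" "c < d \<and> d < length (drop (Suc b) xs) \<and> drop (Suc b) xs!c < drop (Suc b) xs!d"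
    unfolding CT_def TB_def by blast
  have "(\<exists>i1 i2 i3 i4. i1 < i2 \<and> i2 < i3 \<and> i3 < i4 \<and> i4 < length xs \<and> xs!i2 < xs!i1 \<and> xs!i3 < xs!i4)"
    by (rule exI[of _ "a"], rule exI[of _ "b"], rule exI[of _ "Suc b + c"], rule exI[of _ "Suc b + d"]) (use h in auto)
  thus "pop_contains 4 (pop4 1 2 4 3) xs" using pc4[of 4 3 xs] by (simp add: numeral_eq_Suc)
qed

definition TA5 :: "nat list \<Rightarrow> bool" where
  "TA5 s \<longleftrightarrow> (\<exists>c d. c < d \<and> Suc d < length s \<and> s!d < s!c)"

lemma TA5_cons: "TA5 s \<Longrightarrow> TA5 (x#s)"
proof -
  assume "TA5 s"
  then obtain c d where "c < d \<and> Suc d < length s \<and> s!d < s!c" unfolding TA5_def by blast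
  thus "TA5 (x#s)" unfolding TA5_def by (intro exI[of _ "Suc c"] exI[of _ "Suc d"]) auto
qed

lemma TA5_ct: "pop_contains 5 (pop5 1 2 3 4 5) xs \<longleftrightarrow> CT TA5 xs"
proof
  assume "pop_contains 5 (pop5 1 2 3 4 5) xs"
  hence "(\<exists>i1 i2 i3 i4 i5. i1 < i2 \<and> i2 < i3 \<and> i3 < i4 \<and> i4 < i5 \<and> i5 < length xs \<and> xs!i2 < xs!i1 \<and> xs!i4 < xs!i3)" using pc5[of 3 4 5 xs] by (simp add: numeral_eq_Suc)
  then obtain i1 i2 i3 i4 i5 where h: "i1 < i2" "i2 < i3" "i3 < i4" "i4 < i5" "i5 < length xs" "xs!i2 < xs!i1" "xs!i4 < xs!i3" by blast
  have "TA5 (drop (Suc i2) xs)" unfolding TA5_def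
    by (rule exI[of _ "i3 - Suc i2"], rule exI[of _ "i4 - Suc i2"]) (use h in auto)
  thus "CT TA5 xs" unfolding CT_def using h by (intro exI[of _ i1] exI[of _ i2]) auto
next
  assume "CT TA5 xs"
  then obtain a b c d where h: "a < b" "b < length xs" "xs!b < xs!a" "c < d \<and> Suc d < length (drop (Suc b) xs) \<and> drop (Suc b) xs!d < drop (Suc b) xs!c"
    unfolding CT_def TA5_def by blast
  have "(\<exists>i1 i2 i3 i4 i5. i1 < i2 \<and> i2 < i3 \<and> i3 < i4 \<and> i4 < i5 \<and> i5 < length xs \<and> xs!i2 < xs!i1 \<and> xs!i4 < xs!i3)"
    by (rule exI[of _ "a"], rule exI[of _ "b"], rule exI[of _ "Suc b + c"], rule exI[of _ "Suc b + d"], rule exI[of _ "length xs - 1"]) (use h in auto)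
  thus "pop_contains 5 (pop5 1 2 3 4 5) xs" using pc5[of 3 4 5 xs] by (simp add: numeral_eq_Suc)
qed

definition TB5 :: "nat list \<Rightarrow> bool" where
  "TB5 s \<longleftrightarrow> (\<exists>c d. c < d \<and> Suc d < length s \<and> s!c < s!d)"

lemma TB5_cons: "TB5 s \<Longrightarrow> TB5 (x#s)"
proof -
  assume "TB5 s"
  then obtain c d where "c < d \<and> Suc d < length s \<and> s!c < s!d" unfolding TB5_def by blast
  thus "TB5 (x#s)" unfolding TB5_def by (intro exI[of _ "Suc c"] exI[of _ "Suc d"]) auto
qed

lemma TB5_ct: "pop_contains 5 (pop5 1 2 4 3 5) xs \<longleftrightarrow> CT TB5 xs"
proof
  assume "pop_contains 5 (pop5 1 2 4 3 5) xs"
  hence "(\<exists>i1 i2 i3 i4 i5. i1 < i2 \<and> i2 < i3 \<and> i3 < i4 \<and> i4 < i5 \<and> i5 < length xs \<and> xs!i2 < xs!i1 \<and> xs!i3 < xs!i4)" using pc5[of 4 3 5 xs] by (simp add: numeral_eq_Suc)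
  then obtain i1 i2 i3 i4 i5 where h: "i1 < i2" "i2 < i3" "i3 < i4" "i4 < i5" "i5 < length xs" "xs!i2 < xs!i1" "xs!i3 < xs!i4" by blast
  have "TB5 (drop (Suc i2) xs)" unfolding TB5_def
    by (rule exI[of _ "i3 - Suc i2"], rule exI[of _ "i4 - Suc i2"]) (use h in auto)
  thus "CT TB5 xs" unfolding CT_def using h by (intro exI[of _ i1] exI[of _ i2]) auto
next
  assume "CT TB5 xs"
  then obtain a b c d where h: "a < b" "b < length xs" "xs!b < xs!a" "c < d \<and> Suc d < length (drop (Suc b) xs) \<and> drop (Suc b) xs!c < drop (Suc b) xs!d"
    unfolding CT_def TB5_def by blast
  have "(\<exists>i1 i2 i3 i4 i5. i1 < i2 \<and> i2 < i3 \<and> i3 < i4 \<and> i4 < i5 \<and> i5 < length xs \<and> xs!i2 < xs!i1 \<and> xs!i3 < xs!i4)"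
    by (rule exI[of _ "a"], rule exI[of _ "b"], rule exI[of _ "Suc b + c"], rule exI[of _ "Suc b + d"], rule exI[of _ "length xs - 1"]) (use h in auto)
  thus "pop_contains 5 (pop5 1 2 4 3 5) xs" using pc5[of 4 3 5 xs] by (simp add: numeral_eq_Suc)
qed

definition TC :: "nat list \<Rightarrow> bool" where
  "TC s \<longleftrightarrow> (\<exists>c d. 0 < c \<and> c < d \<and> d < length s \<and> s!d < s!c)"

lemma TC_cons: "TC s \<Longrightarrow> TC (x#s)"
proof -
  assume "TC s"
  then obtain c d where "0 < c \<and> c < d \<and> d < length s \<and> s!d < s!c" unfolding TC_def by blast
  thus "TC (x#s)" unfolding TC_def by (intro exI[of _ "Suc c"] exI[of _ "Suc d"]) auto
qed

lemma TC_ct: "pop_contains 5 (pop5 1 2 4 5 3) xs \<longleftrightarrow> CT TC xs"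
proof
  assume "pop_contains 5 (pop5 1 2 4 5 3) xs"
  hence "(\<exists>i1 i2 i3 i4 i5. i1 < i2 \<and> i2 < i3 \<and> i3 < i4 \<and> i4 < i5 \<and> i5 < length xs \<and> xs!i2 < xs!i1 \<and> xs!i5 < xs!i4)" using pc5[of 4 5 3 xs] by (simp add: numeral_eq_Suc)
  then obtain i1 i2 i3 i4 i5 where h: "i1 < i2" "i2 < i3" "i3 < i4" "i4 < i5" "i5 < length xs" "xs!i2 < xs!i1" "xs!i5 < xs!i4" by blast
  have "TC (drop (Suc i2) xs)" unfolding TC_def
    by (rule exI[of _ "i4 - Suc i2"], rule exI[of _ "i5 - Suc i2"]) (use h in auto)
  thus "CT TC xs" unfolding CT_def using h by (intro exI[of _ i1] exI[of _ i2]) auto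
next
  assume "CT TC xs"
  then obtain a b c d where h: "a < b" "b < length xs" "xs!b < xs!a" "0 < c \<and> c < d \<and> d < length (drop (Suc b) xs) \<and> drop (Suc b) xs!d < drop (Suc b) xs!c"
    unfolding CT_def TC_def by blast
  have "(\<exists>i1 i2 i3 i4 i5. i1 < i2 \<and> i2 < i3 \<and> i3 < i4 \<and> i4 < i5 \<and> i5 < length xs \<and> xs!i2 < xs!i1 \<and> xs!i5 < xs!i4)"
    by (rule exI[of _ "a"], rule exI[of _ "b"], rule exI[of _ "Suc b"], rule exI[of _ "Suc b + c"], rule exI[of _ "Suc b + d"]) (use h in auto)
  thus "pop_contains 5 (pop5 1 2 4 5 3) xs" using pc5[of 4 5 3 xs] by (simp add: numeral_eq_Suc)
qed

definition TD :: "nat list \<Rightarrow> bool" where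
  "TD s \<longleftrightarrow> (\<exists>c d. 0 < c \<and> c < d \<and> d < length s \<and> s!c < s!d)"

lemma TD_cons: "TD s \<Longrightarrow> TD (x#s)"
proof -
  assume "TD s"
  then obtain c d where "0 < c \<and> c < d \<and> d < length s \<and> s!c < s!d" unfolding TD_def by blast
  thus "TD (x#s)" unfolding TD_def by (intro exI[of _ "Suc c"] exI[of _ "Suc d"]) auto
qed

lemma TD_ct: "pop_contains 5 (pop5 1 2 5 4 3) xs \<longleftrightarrow> CT TD xs"
proof
  assume "pop_contains 5 (pop5 1 2 5 4 3) xs"
  hence "(\<exists>i1 i2 i3 i4 i5. i1 < i2 \<and> i2 < i3 \<and> i3 < i4 \<and> i4 < i5 \<and> i5 < length xs \<and> xs!i2 < xs!i1 \<and> xs!i4 < xs!i5)" using pc5[of 5 4 3 xs] by (simp add: numeral_eq_Suc)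
  then obtain i1 i2 i3 i4 i5 where h: "i1 < i2" "i2 < i3" "i3 < i4" "i4 < i5" "i5 < length xs" "xs!i2 < xs!i1" "xs!i4 < xs!i5" by blast
  have "TD (drop (Suc i2) xs)" unfolding TD_def
    by (rule exI[of _ "i4 - Suc i2"], rule exI[of _ "i5 - Suc i2"]) (use h in auto)
  thus "CT TD xs" unfolding CT_def using h by (intro exI[of _ i1] exI[of _ i2]) auto
next
  assume "CT TD xs"
  then obtain a b c d where h: "a < b" "b < length xs" "xs!b < xs!a" "0 < c \<and> c < d \<and> d < length (drop (Suc b) xs) \<and> drop (Suc b) xs!c < drop (Suc b) xs!d"
    unfolding CT_def TD_def by blast
  have "(\<exists>i1 i2 i3 i4 i5. i1 < i2 \<and> i2 < i3 \<and> i3 < i4 \<and> i4 < i5 \<and> i5 < length xs \<and> xs!i2 < xs!i1 \<and> xs!i4 < xs!i5)"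
    by (rule exI[of _ "a"], rule exI[of _ "b"], rule exI[of _ "Suc b"], rule exI[of _ "Suc b + c"], rule exI[of _ "Suc b + d"]) (use h in auto)
  thus "pop_contains 5 (pop5 1 2 5 4 3) xs" using pc5[of 5 4 3 xs] by (simp add: numeral_eq_Suc)
qed

definition TE :: "nat list \<Rightarrow> bool" where
  "TE s \<longleftrightarrow> (\<exists>c d. Suc c < d \<and> d < length s \<and> s!d < s!c)"

lemma TE_cons: "TE s \<Longrightarrow> TE (x#s)"
proof -
  assume "TE s"
  then obtain c d where "Suc c < d \<and> d < length s \<and> s!d < s!c" unfolding TE_def by blast
  thus "TE (x#s)" unfolding TE_def by (intro exI[of _ "Suc c"] exI[of _ "Suc d"]) auto
qed

lemma TE_ct: "pop_contains 5 (pop5 1 2 3 5 4) xs \<longleftrightarrow> CT TE xs"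
proof
  assume "pop_contains 5 (pop5 1 2 3 5 4) xs"
  hence "(\<exists>i1 i2 i3 i4 i5. i1 < i2 \<and> i2 < i3 \<and> i3 < i4 \<and> i4 < i5 \<and> i5 < length xs \<and> xs!i2 < xs!i1 \<and> xs!i5 < xs!i3)" using pc5[of 3 5 4 xs] by (simp add: numeral_eq_Suc)
  then obtain i1 i2 i3 i4 i5 where h: "i1 < i2" "i2 < i3" "i3 < i4" "i4 < i5" "i5 < length xs" "xs!i2 < xs!i1" "xs!i5 < xs!i3" by blast
  have "TE (drop (Suc i2) xs)" unfolding TE_def
    by (rule exI[of _ "i3 - Suc i2"], rule exI[of _ "i5 - Suc i2"]) (use h in auto)
  thus "CT TE xs" unfolding CT_def using h by (intro exI[of _ i1] exI[of _ i2]) auto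
next
  assume "CT TE xs"
  then obtain a b c d where h: "a < b" "b < length xs" "xs!b < xs!a" "Suc c < d \<and> d < length (drop (Suc b) xs) \<and> drop (Suc b) xs!d < drop (Suc b) xs!c"
    unfolding CT_def TE_def by blast
  have "(\<exists>i1 i2 i3 i4 i5. i1 < i2 \<and> i2 < i3 \<and> i3 < i4 \<and> i4 < i5 \<and> i5 < length xs \<and> xs!i2 < xs!i1 \<and> xs!i5 < xs!i3)"
    by (rule exI[of _ "a"], rule exI[of _ "b"], rule exI[of _ "Suc b + c"], rule exI[of _ "Suc b + c + 1"], rule exI[of _ "Suc b + d"]) (use h in auto)
  thus "pop_contains 5 (pop5 1 2 3 5 4) xs" using pc5[of 3 5 4 xs] by (simp add: numeral_eq_Suc)
qed

definition TF :: "nat list \<Rightarrow> bool" where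
  "TF s \<longleftrightarrow> (\<exists>c d. Suc c < d \<and> d < length s \<and> s!c < s!d)"

lemma TF_cons: "TF s \<Longrightarrow> TF (x#s)"
proof -
  assume "TF s"
  then obtain c d where "Suc c < d \<and> d < length s \<and> s!c < s!d" unfolding TF_def by blast
  thus "TF (x#s)" unfolding TF_def by (intro exI[of _ "Suc c"] exI[of _ "Suc d"]) auto
qed

lemma TF_ct: "pop_contains 5 (pop5 1 2 5 3 4) xs \<longleftrightarrow> CT TF xs"
proof
  assume "pop_contains 5 (pop5 1 2 5 3 4) xs"
  hence "(\<exists>i1 i2 i3 i4 i5. i1 < i2 \<and> i2 < i3 \<and> i3 < i4 \<and> i4 < i5 \<and> i5 < length xs \<and> xs!i2 < xs!i1 \<and> xs!i3 < xs!i5)" using pc5[of 5 3 4 xs] by (simp add: numeral_eq_Suc)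
  then obtain i1 i2 i3 i4 i5 where h: "i1 < i2" "i2 < i3" "i3 < i4" "i4 < i5" "i5 < length xs" "xs!i2 < xs!i1" "xs!i3 < xs!i5" by blast
  have "TF (drop (Suc i2) xs)" unfolding TF_def
    by (rule exI[of _ "i3 - Suc i2"], rule exI[of _ "i5 - Suc i2"]) (use h in auto)
  thus "CT TF xs" unfolding CT_def using h by (intro exI[of _ i1] exI[of _ i2]) auto
next
  assume "CT TF xs"
  then obtain a b c d where h: "a < b" "b < length xs" "xs!b < xs!a" "Suc c < d \<and> d < length (drop (Suc b) xs) \<and> drop (Suc b) xs!c < drop (Suc b) xs!d"
    unfolding CT_def TF_def by blast
  have "(\<exists>i1 i2 i3 i4 i5. i1 < i2 \<and> i2 < i3 \<and> i3 < i4 \<and> i4 < i5 \<and> i5 < length xs \<and> xs!i2 < xs!i1 \<and> xs!i3 < xs!i5)"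
    by (rule exI[of _ "a"], rule exI[of _ "b"], rule exI[of _ "Suc b + c"], rule exI[of _ "Suc b + c + 1"], rule exI[of _ "Suc b + d"]) (use h in auto)
  thus "pop_contains 5 (pop5 1 2 5 3 4) xs" using pc5[of 5 3 4 xs] by (simp add: numeral_eq_Suc)
qed


lemma rev_TA: "TA (rev s) \<longleftrightarrow> TB s"
proof
  assume "TA (rev s)"
  then obtain c d where h: "c < d" "d < length s" "rev s ! d < rev s ! c" unfolding TA_def by auto
  thus "TB s" unfolding TB_def
    by (intro exI[of _ "length s - Suc d"] exI[of _ "length s - Suc c"]) (auto simp: rev_nth)
next
  assume "TB s"
  then obtain c d where h: "c < d" "d < length s" "s ! c < s ! d" unfolding TB_def by auto
  thus "TA (rev s)" unfolding TA_def
    by (intro exI[of _ "length s - Suc d"] exI[of _ "length s - Suc c"]) (auto simp: rev_nth)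
qed

lemma rev_TC: "TC (rev s) \<longleftrightarrow> TB5 s"
proof
  assume "TC (rev s)"
  then obtain c d where h: "0 < c" "c < d" "d < length s" "rev s ! d < rev s ! c" unfolding TC_def by auto
  thus "TB5 s" unfolding TB5_def
    by (intro exI[of _ "length s - Suc d"] exI[of _ "length s - Suc c"]) (auto simp: rev_nth)
next
  assume "TB5 s"
  then obtain c d where h: "c < d" "Suc d < length s" "s ! c < s ! d" unfolding TB5_def by auto
  thus "TC (rev s)" unfolding TC_def
    by (intro exI[of _ "length s - Suc d"] exI[of _ "length s - Suc c"]) (auto simp: rev_nth)
qed

lemma rev_TE: "TE (rev s) \<longleftrightarrow> TF s"
proof
  assume "TE (rev s)"
  then obtain c d where h: "Suc c < d" "d < length s" "rev s ! d < rev s ! c" unfolding TE_def by auto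
  thus "TF s" unfolding TF_def
    by (intro exI[of _ "length s - Suc d"] exI[of _ "length s - Suc c"]) (auto simp: rev_nth)
next
  assume "TF s"
  then obtain c d where h: "Suc c < d" "d < length s" "s ! c < s ! d" unfolding TF_def by auto
  thus "TE (rev s)" unfolding TE_def
    by (intro exI[of _ "length s - Suc d"] exI[of _ "length s - Suc c"]) (auto simp: rev_nth)
qed

definition gb :: "nat list \<Rightarrow> nat list" where
  "gb s = rev (take (length s - 1) s) @ drop (length s - 1) s"

lemma gb_len: "length (gb s) = length s"
  unfolding gb_def by simp

lemma gb_nth: "i < length s - 1 \<Longrightarrow> gb s ! i = s ! (length s - 2 - i)"
  unfolding gb_def by (simp add: nth_append rev_nth)

lemma gb_inv: "gb (gb s) = s"
proof -
  have t: "take (length s - 1) (gb s) = rev (take (length s - 1) s)" unfolding gb_def by simp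
  have d: "drop (length s - 1) (gb s) = drop (length s - 1) s" unfolding gb_def by simp
  show ?thesis unfolding gb_def[of "gb s"] gb_len t d by simp
qed

lemma gb_mset: "mset (gb s) = mset s"
  unfolding gb_def by (metis append_take_drop_id mset_append mset_rev)

lemma gb_TA5: "TA5 (gb s) \<longleftrightarrow> TB5 s"
proof
  assume "TA5 (gb s)"
  then obtain c d where h: "c < d" "Suc d < length s" "gb s ! d < gb s ! c" unfolding TA5_def gb_len by auto
  hence "s ! (length s - 2 - d) < s ! (length s - 2 - c)" using gb_nth[of d s] gb_nth[of c s] by simp
  thus "TB5 s" unfolding TB5_def using h
    by (intro exI[of _ "length s - 2 - d"] exI[of _ "length s - 2 - c"]) auto
next
  assume "TB5 s"
  then obtain c d where h: "c < d" "Suc d < length s" "s ! c < s ! d" unfolding TB5_def by auto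
  have a1: "length s - 2 - (length s - 2 - d) = d" "length s - 2 - (length s - 2 - c) = c"
    "length s - 2 - d < length s - 1" "length s - 2 - c < length s - 1" using h by arith+
  have "gb s ! (length s - 2 - d) = s ! d" using a1 gb_nth[of "length s - 2 - d" s] by simp
  moreover have "gb s ! (length s - 2 - c) = s ! c" using a1 gb_nth[of "length s - 2 - c" s] by simp
  ultimately show "TA5 (gb s)" unfolding TA5_def gb_len using h
    by (intro exI[of _ "length s - 2 - d"] exI[of _ "length s - 2 - c"]) auto
qed

definition gc :: "nat list \<Rightarrow> nat list" where
  "gc s = take 1 s @ rev (drop 1 s)"

lemma gc_len: "length (gc s) = length s"
  unfolding gc_def by simp

lemma gc_nth: "0 < i \<Longrightarrow> i < length s \<Longrightarrow> gc s ! i = s ! (length s - i)"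
  unfolding gc_def by (simp add: nth_append rev_nth Suc_diff_Suc)

lemma gc_inv: "gc (gc s) = s"
  unfolding gc_def by (cases s) auto

lemma gc_mset: "mset (gc s) = mset s"
  unfolding gc_def by (metis append_take_drop_id mset_append mset_rev)

lemma gc_TC: "TC (gc s) \<longleftrightarrow> TD s"
proof
  assume "TC (gc s)"
  then obtain c d where h: "0 < c" "c < d" "d < length s" "gc s ! d < gc s ! c" unfolding TC_def gc_len by auto
  hence "s ! (length s - d) < s ! (length s - c)" using gc_nth[of d s] gc_nth[of c s] by simp
  thus "TD s" unfolding TD_def using h
    by (intro exI[of _ "length s - d"] exI[of _ "length s - c"]) auto
next
  assume "TD s"
  then obtain c d where h: "0 < c" "c < d" "d < length s" "s ! c < s ! d" unfolding TD_def by auto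
  have "gc s ! (length s - d) = s ! d" using h gc_nth[of "length s - d" s] by simp
  moreover have "gc s ! (length s - c) = s ! c" using h gc_nth[of "length s - c" s] by simp
  ultimately show "TC (gc s)" unfolding TC_def gc_len using h
    by (intro exI[of _ "length s - d"] exI[of _ "length s - c"]) auto
qed

lemma avoid_eq: "(\<And>xs. pop_contains k P xs \<longleftrightarrow> CT T xs) \<Longrightarrow> avoiders n k P = {xs \<in> perms n. \<not> CT T xs}"
  unfolding avoiders_def by simp

theorem mainTheorem13:
  shows "wilf_equiv 4 (pop4 1 2 3 4) (pop4 1 2 4 3)
    \<and> wilf_equiv 5 (pop5 1 2 3 4 5) (pop5 1 2 4 3 5)
    \<and> wilf_equiv 5 (pop5 1 2 4 3 5) (pop5 1 2 4 5 3)
    \<and> wilf_equiv 5 (pop5 1 2 4 5 3) (pop5 1 2 5 4 3)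
    \<and> wilf_equiv 5 (pop5 1 2 3 5 4) (pop5 1 2 5 3 4)"
proof (intro conjI)
  show "wilf_equiv 4 (pop4 1 2 3 4) (pop4 1 2 4 3)"
    unfolding wilf_equiv_def avoid_eq[OF TA_ct] avoid_eq[OF TB_ct]
    using generic[of rev TA TB] rev_TA TA_cons TB_cons by simp
  show "wilf_equiv 5 (pop5 1 2 3 4 5) (pop5 1 2 4 3 5)"
    unfolding wilf_equiv_def avoid_eq[OF TA5_ct] avoid_eq[OF TB5_ct]
    using generic[of gb TA5 TB5] gb_inv gb_mset gb_TA5 TA5_cons TB5_cons by simp
  show "wilf_equiv 5 (pop5 1 2 4 3 5) (pop5 1 2 4 5 3)"
    unfolding wilf_equiv_def avoid_eq[OF TB5_ct] avoid_eq[OF TC_ct]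
    using generic[of rev TC TB5] rev_TC TC_cons TB5_cons by simp
  show "wilf_equiv 5 (pop5 1 2 4 5 3) (pop5 1 2 5 4 3)"
    unfolding wilf_equiv_def avoid_eq[OF TC_ct] avoid_eq[OF TD_ct]
    using generic[of gc TC TD] gc_inv gc_mset gc_TC TC_cons TD_cons by simp
  show "wilf_equiv 5 (pop5 1 2 3 5 4) (pop5 1 2 5 3 4)"
    unfolding wilf_equiv_def avoid_eq[OF TE_ct] avoid_eq[OF TF_ct]
    using generic[of rev TE TF] rev_TE TE_cons TF_cons by simp
qed

end
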